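(* If $V=Mod(\Sigma)$ is a stable non-trivial variety of semigroups, then $\Sigma\models f(f(x_1,x_1),x_1)\approx f(x_1,x_1)$.
   Context: Type $\tau=(2)$: a single binary operation symbol $f$; terms over $X=\{x_1,x_2,\dots\}$, $W_\tau(X_n)$ terms in $x_1,\dots,x_n$. A semigroup variety is a variety of groupoids satisfying associativity $f(x_1,f(x_2,x_3))\approx f(f(x_1,x_2),x_3)$; non-trivial means it contains an algebra with more than one element. $\Sigma\models t\approx s$: every groupoid satisfying $\Sigma$ satisfies $t\approx s$. Positions $Pos(t)\subseteq\{1,2\}^*$ (root $\varepsilon$, children $p1,p2$), $sub_t(p)$ the subterm at $p$, $\preceq$ prefix order, $t(p;r)$ replacement at $p$. A position $p\in Pos(t)$, $t\in W_\tau(X_n)$, is $\Sigma$-essential if there is an algebra $\mathcal A\models\Sigma$ in which the term operation of $t(p;x_{n+1})$ depends on $x_{n+1}$ (changing only the value of $x_{n+1}$ can change the result); $PEss(t,\Sigma)$ is the set of these. $SEss(t,\Sigma)=\{r\mid \Sigma\models r\approx sub_t(p),\ p\in PEss(t,\Sigma)\}$. $P_r^t$ is the set of $\preceq$-minimal elements of $\{p\in Pos(t)\mid\Sigma\models sub_t(p)\approx r\}$; $t^\Sigma(r\leftarrow u)=t$ if $P_r^t=\emptyset$, else $t$ with subterms at all positions of $P_r^t$ replaced by $u$. $V$ is stable if, with $\Sigma=Id(V)$: $t\approx s\in\Sigma$ and $r\in SEss(t,\Sigma)\cap SEss(s,\Sigma)$ imply $t^\Sigma(r\leftarrow u)\approx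 s^\Sigma(r\leftarrow u)\in\Sigma$ for all $u$. *)

theory Defs
  imports "HOL-Library.Sublist"
begin

datatype trm = Var nat | F trm trm

fun maxvar :: "trm \<Rightarrow> nat" where
  "maxvar (Var i) = i"
| "maxvar (F a b) = max (maxvar a) (maxvar b)"

fun eval :: "(nat \<Rightarrow> nat \<Rightarrow> nat) \<Rightarrow> (nat \<Rightarrow> nat) \<Rightarrow> trm \<Rightarrow> nat" where
  "eval op \<sigma> (Var i) = \<sigma> i"
| "eval op \<sigma> (F a b) = op (eval op \<sigma> a) (eval op \<sigma> b)"

type_synonym idnt = "trm \<times> trm"

definition groupoid :: "nat set \<Rightarrow> (nat \<Rightarrow> nat \<Rightarrow> nat) \<Rightarrow> bool" where
  "groupoid C op \<longleftrightarrow> C \<noteq> {} \<and> (\<forall>a\<in>C. \<forall>b\<in>C. op a b \<in> C)"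

definition holds :: "nat set \<Rightarrow> (nat \<Rightarrow> nat \<Rightarrow> nat) \<Rightarrow> idnt \<Rightarrow> bool" where
  "holds C op e \<longleftrightarrow> (\<forall>\<sigma>. (\<forall>i. \<sigma> i \<in> C) \<longrightarrow> eval op \<sigma> (fst e) = eval op \<sigma> (snd e))"

definition is_model :: "nat set \<Rightarrow> (nat \<Rightarrow> nat \<Rightarrow> nat) \<Rightarrow> idnt set \<Rightarrow> bool" where
  "is_model C op \<Sigma> \<longleftrightarrow> groupoid C op \<and> (\<forall>e\<in>\<Sigma>. holds C op e)"

definition entails :: "idnt set \<Rightarrow> trm \<Rightarrow> trm \<Rightarrow> bool" where
  "entails \<Sigma> t s \<longleftrightarrow> (\<forall>C op. is_model C op \<Sigma> \<longrightarrow> holds C op (t, s))"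

definition Id_of :: "idnt set \<Rightarrow> idnt set" where
  "Id_of \<Sigma> = {(t, s). entails \<Sigma> t s}"

definition semigroup_variety :: "idnt set \<Rightarrow> bool" where
  "semigroup_variety \<Sigma> \<longleftrightarrow>
     entails \<Sigma> (F (Var 1) (F (Var 2) (Var 3))) (F (F (Var 1) (Var 2)) (Var 3))"

definition nontrivial :: "idnt set \<Rightarrow> bool" where
  "nontrivial \<Sigma> \<longleftrightarrow> (\<exists>C op. is_model C op \<Sigma> \<and> (\<exists>a\<in>C. \<exists>b\<in>C. a \<noteq> b))"

fun Pos :: "trm \<Rightarrow> nat list set" where
  "Pos (Var i) = {[]}"
| "Pos (F a b) = {[]} \<union> Cons 1 ` Pos a \<union> Cons 2 ` Pos b"

fun sub :: "trm \<Rightarrow> nat list \<Rightarrow> trm" where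
  "sub t [] = t"
| "sub (F a b) (k # p) = (if k = 1 then sub a p else sub b p)"
| "sub (Var i) (k # p) = Var i"

fun repl :: "trm \<Rightarrow> nat list \<Rightarrow> trm \<Rightarrow> trm" where
  "repl t [] r = r"
| "repl (F a b) (k # p) r = (if k = 1 then F (repl a p r) b else F a (repl b p r))"
| "repl (Var i) (k # p) r = Var i"

text \<open>Replace the subterms at all positions of a set of (pairwise incomparable) positions.\<close>
fun repl_set :: "trm \<Rightarrow> nat list set \<Rightarrow> trm \<Rightarrow> trm" where
  "repl_set (Var i) P u = (if [] \<in> P then u else Var i)"
| "repl_set (F a b) P u = (if [] \<in> P then u else
      F (repl_set a {p. 1 # p \<in> P} u) (repl_set b {p. 2 # p \<in> P} u))"

definition depends_on :: "nat set \<Rightarrow> (nat \<Rightarrow> nat \<Rightarrow> nat) \<Rightarrow> trm \<Rightarrow> nat \<Rightarrow> bool" where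
  "depends_on C op t k \<longleftrightarrow> (\<exists>\<sigma> a. (\<forall>i. \<sigma> i \<in> C) \<and> a \<in> C \<and>
       eval op \<sigma> t \<noteq> eval op (\<sigma>(k := a)) t)"

text \<open>t \<in> W(X_n) with n = maxvar t; x_{n+1} is the fresh variable.\<close>
definition PEss :: "trm \<Rightarrow> idnt set \<Rightarrow> nat list set" where
  "PEss t \<Sigma> = {p \<in> Pos t. \<exists>C op. is_model C op \<Sigma> \<and>
       depends_on C op (repl t p (Var (Suc (maxvar t)))) (Suc (maxvar t))}"

definition SEss :: "trm \<Rightarrow> idnt set \<Rightarrow> trm set" where
  "SEss t \<Sigma> = {r. \<exists>p \<in> PEss t \<Sigma>. entails \<Sigma> r (sub t p)}"

definition Pr :: "idnt set \<Rightarrow> trm \<Rightarrow> trm \<Rightarrow> nat list set" where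
  "Pr \<Sigma> r t = {p \<in> Pos t. entails \<Sigma> (sub t p) r \<and>
       \<not> (\<exists>q \<in> Pos t. entails \<Sigma> (sub t q) r \<and> strict_prefix q p)}"

definition replS :: "idnt set \<Rightarrow> trm \<Rightarrow> trm \<Rightarrow> trm \<Rightarrow> trm" where
  "replS \<Sigma> t r u = (if Pr \<Sigma> r t = {} then t else repl_set t (Pr \<Sigma> r t) u)"

definition stable :: "idnt set \<Rightarrow> bool" where
  "stable \<Sigma>0 \<longleftrightarrow> (let \<Sigma> = Id_of \<Sigma>0 in
     \<forall>t s r u. (t, s) \<in> \<Sigma> \<longrightarrow> r \<in> SEss t \<Sigma> \<inter> SEss s \<Sigma> \<longrightarrow>
        (replS \<Sigma> t r u, replS \<Sigma> s r u) \<in> \<Sigma>)"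

end

theory Submission
  imports Defs
begin

lemma model_Id: "is_model C op (Id_of \<Sigma>) \<longleftrightarrow> is_model C op \<Sigma>"
  unfolding is_model_def Id_of_def entails_def by (auto simp: is_model_def)

lemma entails_Id: "entails (Id_of \<Sigma>) = entails \<Sigma>"
  unfolding entails_def[abs_def] model_Id by simp

lemma Pr_Id: "Pr (Id_of \<Sigma>) = Pr \<Sigma>"
  unfolding Pr_def[abs_def] entails_Id by simp

lemma replS_Id: "replS (Id_of \<Sigma>) = replS \<Sigma>"
  unfolding replS_def[abs_def] Pr_Id by simp

lemma entD: "entails \<Sigma> t s \<Longrightarrow> is_model C op \<Sigma> \<Longrightarrow> (\<And>i. \<sigma> i \<in> C) \<Longrightarrow> eval op \<sigma> t = eval op \<sigma> s"
  unfolding entails_def holds_def by auto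

lemma entI: "(\<And>C op \<sigma>. is_model C op \<Sigma> \<Longrightarrow> (\<And>i. \<sigma> i \<in> C) \<Longrightarrow> eval op \<sigma> t = eval op \<sigma> s) \<Longrightarrow> entails \<Sigma> t s"
  unfolding entails_def holds_def by auto

lemma clos: "is_model C op \<Sigma> \<Longrightarrow> a \<in> C \<Longrightarrow> b \<in> C \<Longrightarrow> op a b \<in> C"
  unfolding is_model_def groupoid_def by auto

lemma assoc: assumes "semigroup_variety \<Sigma>" "is_model C op \<Sigma>" "a \<in> C" "b \<in> C" "c \<in> C"
  shows "op (op a b) c = op a (op b c)"
proof -
  let ?\<sigma> = "\<lambda>i::nat. if i = 1 then a else if i = 2 then b else c"
  have "eval op ?\<sigma> (F (Var 1) (F (Var 2) (Var 3))) = eval op ?\<sigma> (F (F (Var 1) (Var 2)) (Var 3))"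
    by (rule entD[OF assms(1)[unfolded semigroup_variety_def] assms(2)]) (use assms in auto)
  then show ?thesis by simp
qed

lemma stab_use:
  assumes "stable \<Sigma>" "entails \<Sigma> t s" "p \<in> Pos t" "q \<in> Pos s" "sub t p = r" "sub s q = r"
    "is_model C op \<Sigma>" "depends_on C op (repl t p (Var (Suc (maxvar t)))) (Suc (maxvar t))"
    "is_model C' op' \<Sigma>" "depends_on C' op' (repl s q (Var (Suc (maxvar s)))) (Suc (maxvar s))"
  shows "entails \<Sigma> (replS \<Sigma> t r u) (replS \<Sigma> s r u)"
proof -
  have "p \<in> PEss t (Id_of \<Sigma>)" using assms unfolding PEss_def model_Id by blast
  hence 1: "r \<in> SEss t (Id_of \<Sigma>)" unfolding SEss_def entails_Id using assms(5)
    by (auto intro!: bexI[of _ p] simp: entails_def holds_def)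
  have "q \<in> PEss s (Id_of \<Sigma>)" using assms unfolding PEss_def model_Id by blast
  hence 2: "r \<in> SEss s (Id_of \<Sigma>)" unfolding SEss_def entails_Id using assms(6)
    by (auto intro!: bexI[of _ q] simp: entails_def holds_def)
  have "(t, s) \<in> Id_of \<Sigma>" using assms(2) by (simp add: Id_of_def)
  with 1 2 assms(1) have "(replS (Id_of \<Sigma>) t r u, replS (Id_of \<Sigma>) s r u) \<in> Id_of \<Sigma>"
    unfolding stable_def Let_def by blast
  thus ?thesis unfolding replS_Id by (simp add: Id_of_def)
qed

lemma ent_refl: "entails \<Sigma> t t" by (simp add: entails_def holds_def)

lemma ent_trans: "entails \<Sigma> a b \<Longrightarrow> entails \<Sigma> b c \<Longrightarrow> entails \<Sigma> a c"
  by (simp add: entails_def holds_def)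
lemma ent_sym: "entails \<Sigma> a b \<Longrightarrow> entails \<Sigma> b a"
  by (simp add: entails_def holds_def)

lemma constD: "entails \<Sigma> t s \<Longrightarrow> is_model C op \<Sigma> \<Longrightarrow> a \<in> C \<Longrightarrow>
   eval op (\<lambda>i. a) t = eval op (\<lambda>i. a) s"
  by (rule entD) auto

theorem lemma3p3:
  fixes \<Sigma> :: "idnt set"
  assumes "semigroup_variety \<Sigma>" and "nontrivial \<Sigma>" and "stable \<Sigma>"
  shows "entails \<Sigma> (F (F (Var 1) (Var 1)) (Var 1)) (F (Var 1) (Var 1))"
proof (rule ccontr)
  define X where "X = Var 1"
  define Y where "Y = Var 2"
  define Z where "Z = Var 3"
  define S where "S = F X X"
  assume "\<not> entails \<Sigma> (F (F (Var 1) (Var 1)) (Var 1)) (F (Var 1) (Var 1))"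
  hence G: "\<not> entails \<Sigma> (F S X) S" by (simp add: S_def X_def)
  note sv = assms(1) and st = assms(3)
  note as = assoc[OF sv]
  have Gc: "entails \<Sigma> (F S X) S" if "\<And>C op a. is_model C op \<Sigma> \<Longrightarrow> a \<in> C \<Longrightarrow> op (op a a) a = op a a"
    by (rule entI) (auto simp: S_def X_def that)
  have nX: "\<not> entails \<Sigma> X S"
  proof
    assume h: "entails \<Sigma> X S"
    have "entails \<Sigma> (F S X) S"
    proof (rule Gc)
      fix C op a assume m: "is_model C op \<Sigma>" "a \<in> C"
      have "a = op a a" using constD[OF h m] by (simp add: X_def S_def)
      thus "op (op a a) a = op a a" by metis
    qed
    with G show False by simp
  qed
  have nXS: "\<not> entails \<Sigma> (F X S) S"
  proof
    assume h: "entails \<Sigma> (F X S) S"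
    have "entails \<Sigma> (F S X) S"
    proof (rule Gc)
      fix C op a assume m: "is_model C op \<Sigma>" "a \<in> C"
      have "op a (op a a) = op a a" using constD[OF h m] by (simp add: X_def S_def)
      thus "op (op a a) a = op a a" using as[OF m(1) m(2) m(2) m(2)] by simp
    qed
    with G show False by simp
  qed
  have LD: "\<exists>C op a b c. is_model C op \<Sigma> \<and> a \<in> C \<and> b \<in> C \<and> c \<in> C \<and> op a c \<noteq> op b c"
  proof (rule ccontr)
    assume n: "\<not> ?thesis"
    have "entails \<Sigma> (F S X) S"
    proof (rule Gc)
      fix C op a assume m: "is_model C op \<Sigma>" "a \<in> C"
      show "op (op a a) a = op a a" using n m clos[OF m(1) m(2) m(2)] by blast
    qed
    with G show False by simp
  qed
  have RD: "\<exists>C op a b c. is_model C op \<Sigma> \<and> a \<in> C \<and> b \<in> C \<and> c \<in> C \<and> op c a \<noteq> op c b"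
  proof (rule ccontr)
    assume n: "\<not> ?thesis"
    have "entails \<Sigma> (F S X) S"
    proof (rule Gc)
      fix C op a assume m: "is_model C op \<Sigma>" "a \<in> C"
      have "op a (op a a) = op a a" using n m clos[OF m(1) m(2) m(2)] by blast
      thus "op (op a a) a = op a a" using as[OF m(1) m(2) m(2) m(2)] by simp
    qed
    with G show False by simp
  qed
  obtain C1 op1 a1 b1 c1 where L: "is_model C1 op1 \<Sigma>" "a1 \<in> C1" "b1 \<in> C1" "c1 \<in> C1" "op1 a1 c1 \<noteq> op1 b1 c1"
    using LD by blast
  obtain C2 op2 a2 b2 c2 where R: "is_model C2 op2 \<Sigma>" "a2 \<in> C2" "b2 \<in> C2" "c2 \<in> C2" "op2 c2 a2 \<noteq> op2 c2 b2"
    using RD by blast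
  have comm_ent: "entails \<Sigma> (F X Y) (F Y X)"
  proof -
    have e: "entails \<Sigma> (F X S) (F S X)"
      by (rule entI) (auto simp: X_def S_def as)
    have dt: "depends_on C2 op2 (repl (F X S) [2] (Var (Suc (maxvar (F X S))))) (Suc (maxvar (F X S)))"
      unfolding depends_on_def X_def S_def
      by (rule exI[of _ "\<lambda>i. if i = 2 then a2 else c2"], rule exI[of _ b2]) (use R in auto)
    have ds: "depends_on C1 op1 (repl (F S X) [1] (Var (Suc (maxvar (F S X))))) (Suc (maxvar (F S X)))"
      unfolding depends_on_def X_def S_def
      by (rule exI[of _ "\<lambda>i. if i = 2 then a1 else c1"], rule exI[of _ b1]) (use L in auto)
    have "entails \<Sigma> (replS \<Sigma> (F X S) S Y) (replS \<Sigma> (F S X) S Y)"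
      by (rule stab_use[OF st e _ _ _ _ R(1) dt L(1) ds]) (auto simp: S_def)
    moreover have "Pr \<Sigma> S (F X S) = {[2]}"
      unfolding Pr_def using nX nXS by (auto simp: ent_refl S_def X_def)
    moreover have "Pr \<Sigma> S (F S X) = {[1]}"
      unfolding Pr_def using nX G by (auto simp: ent_refl S_def X_def)
    ultimately show ?thesis by (simp add: replS_def X_def S_def)
  qed
  have comm: "op a b = op b a" if "is_model C op \<Sigma>" "a \<in> C" "b \<in> C" for C op a b
    using entD[OF comm_ent that(1), of "\<lambda>i. if i = 1 then a else b"] that by (auto simp: X_def Y_def)
  show False
  proof (cases "\<exists>C op a b c. is_model C op \<Sigma> \<and> a \<in> C \<and> b \<in> C \<and> c \<in> C \<and> op (op a a) b \<noteq> op (op a a) c")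
    case False
    have e: "entails \<Sigma> (F S X) (F S Y)"
    proof (rule entI)
      fix C op \<sigma> assume m: "is_model C op \<Sigma>" "\<And>i. (\<sigma> :: nat \<Rightarrow> nat) i \<in> C"
      show "eval op \<sigma> (F S X) = eval op \<sigma> (F S Y)"
        using False m by (auto simp: S_def X_def Y_def)
    qed
    have dt: "depends_on C1 op1 (repl (F S X) [1] (Var (Suc (maxvar (F S X))))) (Suc (maxvar (F S X)))"
      unfolding depends_on_def X_def S_def
      by (rule exI[of _ "\<lambda>i. if i = 2 then a1 else c1"], rule exI[of _ b1]) (use L in auto)
    have ds: "depends_on C1 op1 (repl (F S Y) [1] (Var (Suc (maxvar (F S Y))))) (Suc (maxvar (F S Y)))"
      unfolding depends_on_def X_def S_def Y_def
      by (rule exI[of _ "\<lambda>i. if i = 3 then a1 else c1"], rule exI[of _ b1]) (use L in auto)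
    have r: "entails \<Sigma> (replS \<Sigma> (F S X) S Z) (replS \<Sigma> (F S Y) S Z)"
      by (rule stab_use[OF st e _ _ _ _ L(1) dt L(1) ds]) (auto simp: S_def)
    have nSY: "\<not> entails \<Sigma> (F S Y) S"
    proof
      assume h: "entails \<Sigma> (F S Y) S"
      have "entails \<Sigma> (F S X) S"
        by (rule Gc) (use constD[OF h] in \<open>auto simp: S_def X_def Y_def\<close>)
      with G show False by simp
    qed
    have nY: "\<not> entails \<Sigma> Y S"
    proof
      assume h: "entails \<Sigma> Y S"
      have "entails \<Sigma> X S"
        by (rule entI) (use constD[OF h] in \<open>auto simp: S_def X_def Y_def\<close>)
      with nX show False by simp
    qed
    have "Pr \<Sigma> S (F S X) = {[1]}"
      unfolding Pr_def using nX G by (auto simp: ent_refl S_def X_def)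
    moreover have "Pr \<Sigma> S (F S Y) = {[1]}"
      unfolding Pr_def using nX nY nSY by (auto simp: ent_refl S_def X_def Y_def)
    ultimately have zz: "entails \<Sigma> (F Z X) (F Z Y)" using r by (simp add: replS_def X_def S_def Y_def)
    have "eval op2 (\<lambda>i. if i = 3 then c2 else if i = 1 then a2 else b2) (F Z X) =
          eval op2 (\<lambda>i. if i = 3 then c2 else if i = 1 then a2 else b2) (F Z Y)"
      by (rule entD[OF zz R(1)]) (use R in auto)
    with R show False by (auto simp: X_def Y_def Z_def)
  next
    case True
    then obtain C op a b c where D: "is_model C op \<Sigma>" "a \<in> C" "b \<in> C" "c \<in> C" "op (op a a) b \<noteq> op (op a a) c"
      by blast
    have aa: "op a a \<in> C" using clos[OF D(1) D(2) D(2)] .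
    show False
    proof (cases "entails \<Sigma> (F S S) S")
      case False
      have e: "entails \<Sigma> (F S S) (F X (F S X))"
        by (rule entI) (auto simp: X_def S_def as clos)
      have dt: "depends_on C op (repl (F S S) [1] (Var (Suc (maxvar (F S S))))) (Suc (maxvar (F S S)))"
        unfolding depends_on_def X_def S_def
        by (rule exI[of _ "\<lambda>i. if i = 2 then b else a"], rule exI[of _ c]) (use D aa comm[OF D(1)] in auto)
      have key2: "op a (op y a) = op (op a a) y" if y: "y \<in> C" for y
        using comm[OF D(1) y D(2)] as[OF D(1) D(2) D(2) y] by simp
      have ds: "depends_on C op (repl (F X (F S X)) [2,1] (Var (Suc (maxvar (F X (F S X)))))) (Suc (maxvar (F X (F S X))))"
        unfolding depends_on_def X_def S_def
        apply (rule exI[of _ "\<lambda>i. if i = 2 then b else a"], rule exI[of _ c])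
        using D aa key2[OF D(3)] key2[OF D(4)] by auto
      have r: "entails \<Sigma> (replS \<Sigma> (F S S) S Y) (replS \<Sigma> (F X (F S X)) S Y)"
        by (rule stab_use[OF st e _ _ _ _ D(1) dt D(1) ds]) (auto simp: S_def)
      have n2: "\<not> entails \<Sigma> (F X (F S X)) S"
        using False e ent_trans by blast
      have "Pr \<Sigma> S (F S S) = {[1],[2]}"
        unfolding Pr_def using nX False by (auto simp: ent_refl S_def X_def)
      moreover have "Pr \<Sigma> S (F X (F S X)) = {[2,1]}"
        unfolding Pr_def using nX n2 G by (auto simp: ent_refl S_def X_def)
      ultimately have h: "entails \<Sigma> (F Y Y) (F X (F Y X))" using r by (simp add: replS_def X_def S_def)
      have "entails \<Sigma> (F S X) S"
      proof (rule Gc)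
        fix C op a assume m: "is_model C op \<Sigma>" "a \<in> C"
        have "op a a = op a (op a a)" using constD[OF h m] by (simp add: X_def Y_def)
        thus "op (op a a) a = op a a" using as[OF m(1) m(2) m(2) m(2)] by simp
      qed
      with G show False by simp
    next
      case True
      have E4: "op' (op' x x) (op' x x) = op' x x" if m: "is_model C' op' \<Sigma>" "x \<in> C'" for C' op' x
        using constD[OF True m] by (simp add: S_def X_def)
      have e: "entails \<Sigma> (F S X) (F S (F X S))"
      proof (rule entI)
        fix C op \<sigma> assume m: "is_model C op \<Sigma>" "\<And>i. (\<sigma> :: nat \<Rightarrow> nat) i \<in> C"
        define a where "a = \<sigma> 1"
        have a: "a \<in> C" using m(2) by (simp add: a_def)
        have aa: "op a a \<in> C" using clos[OF m(1) a a] .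
        have "op (op a a) (op a (op a a)) = op (op (op a a) a) (op a a)"
          using as[OF m(1) aa a aa] by simp
        also have "\<dots> = op (op a (op a a)) (op a a)" using as[OF m(1) a a a] by simp
        also have "\<dots> = op a (op (op a a) (op a a))" using as[OF m(1) a aa aa] by simp
        also have "\<dots> = op a (op a a)" using E4[OF m(1) a] by simp
        also have "\<dots> = op (op a a) a" using as[OF m(1) a a a] by simp
        finally show "eval op \<sigma> (F S X) = eval op \<sigma> (F S (F X S))"
          by (simp add: S_def X_def a_def)
      qed
      have dt: "depends_on C op (repl (F S X) [1] (Var (Suc (maxvar (F S X))))) (Suc (maxvar (F S X)))"
        unfolding depends_on_def X_def S_def
        by (rule exI[of _ "\<lambda>i. if i = 2 then b else op a a"], rule exI[of _ c]) (use D aa comm[OF D(1)] in auto)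
      have key: "op (op a y) (op a (op a a)) = op (op a a) y" if y: "y \<in> C" for y
      proof -
        have ay: "op a y \<in> C" using clos[OF D(1) D(2) y] .
        have a3: "op a (op a a) \<in> C" using clos[OF D(1) D(2) aa] .
        have "op (op a y) (op a (op a a)) = op (op y a) (op a (op a a))" using comm[OF D(1) D(2) y] by simp
        also have "\<dots> = op y (op a (op a (op a a)))" using as[OF D(1) y D(2) a3] by simp
        also have "op a (op a (op a a)) = op (op a a) (op a a)"
          using as[OF D(1) D(2) D(2) aa] by simp
        also have "\<dots> = op a a" using E4[OF D(1) D(2)] .
        also have "op y (op a a) = op (op a a) y" using comm[OF D(1) y aa] .
        finally show ?thesis .
      qed
      have ds: "depends_on C op (repl (F S (F X S)) [1] (Var (Suc (maxvar (F S (F X S)))))) (Suc (maxvar (F S (F X S))))"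
        unfolding depends_on_def X_def S_def
        apply (rule exI[of _ "\<lambda>i. if i = 2 then op a b else a"], rule exI[of _ "op a c"])
        using D aa clos[OF D(1) D(2) D(3)] clos[OF D(1) D(2) D(4)] key[OF D(3)] key[OF D(4)] by auto
      have r: "entails \<Sigma> (replS \<Sigma> (F S X) S Y) (replS \<Sigma> (F S (F X S)) S Y)"
        by (rule stab_use[OF st e _ _ _ _ D(1) dt D(1) ds]) (auto simp: S_def)
      have n2: "\<not> entails \<Sigma> (F S (F X S)) S"
        using G e ent_trans by blast
      have "Pr \<Sigma> S (F S X) = {[1]}"
        unfolding Pr_def using nX G by (auto simp: ent_refl S_def X_def)
      moreover have "Pr \<Sigma> S (F S (F X S)) = {[1],[2,2]}"
        unfolding Pr_def using nX n2 nXS by (auto simp: ent_refl S_def X_def)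
      ultimately have h: "entails \<Sigma> (F Y X) (F Y (F X Y))" using r by (simp add: replS_def X_def S_def)
      have "entails \<Sigma> (F S X) S"
      proof (rule Gc)
        fix C op a assume m: "is_model C op \<Sigma>" "a \<in> C"
        have "op a a = op a (op a a)" using constD[OF h m] by (simp add: X_def Y_def)
        thus "op (op a a) a = op a a" using as[OF m(1) m(2) m(2) m(2)] by simp
      qed
      with G show False by simp
    qed
  qed
qed

end
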